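(* For every rooted realizable chirotope $(\chi,u)$, there exists $\varepsilon>0$ such that for every $\delta>0$ there exists a right-$(\delta,\varepsilon)$-squeezing of $(\chi,u)$.
   Context: A chirotope on a finite set $E$ is a map $\chi$ from ordered triples of distinct elements of $E$ to $\{-1,1\}$ satisfying the usual alternating symmetry and the interiority and transitivity axioms. It is realizable if there exist points $\mathfrak p_e\in\mathbb R^2$ ($e\in E$), no three collinear, such that $\chi(x,y,z)=1$ iff $\mathfrak p_x,\mathfrak p_y,\mathfrak p_z$ are in counterclockwise order (a realization of $\chi$). A rooted chirotope is a pair $(\chi,u)$ with $u$ an extreme element of $\chi$ (a convex hull vertex: there is $y\neq u$ with $\chi(u,y,z)$ constant over all other $z$); $u^+$ (resp. $u^-$) is the successor (resp. predecessor) of $u$ in counterclockwise order on the convex hull, i.e. the element $y$ with $\chi(u,y,z)=1$ (resp. $\chi(y,u,z)=1$) for all $z\notin\{u,y\}$. A right-$(\delta,\varepsilon)$-squeezing of a rooted chirotope $(\chi,u)$ is a realization $\mathcal P=\{\mathfrak p_e\}$ of $\chi$ such that $\mathfrak p_u=(0,1)$, $\mathfrak p_{u^+}=(0,0)$, $\mathfrak p_{u^-}=(1,0)$, $\mathcal P\setminus\{\mathfrak p_u,\mathfrak p_{u^+}\}\subseteq[\varepsilon,1]\times[-\delta,\delta]$, and every line through two points of $\mathcal P\setminus\{\mathfrak p_u\}$ has slope in $[-\delta,\delta]$. *)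

theory Defs
  imports Main "HOL-Analysis.Analysis"
begin

text \<open>A chirotope on a finite set E, given by a map chi on triples; only its values on
  ordered triples of pairwise distinct elements of E matter (Knuth's CC-system axioms).\<close>

definition distinct3 :: "'a \<Rightarrow> 'a \<Rightarrow> 'a \<Rightarrow> bool" where
  "distinct3 x y z \<longleftrightarrow> x \<noteq> y \<and> y \<noteq> z \<and> x \<noteq> z"

definition chirotope :: "'a set \<Rightarrow> ('a \<Rightarrow> 'a \<Rightarrow> 'a \<Rightarrow> int) \<Rightarrow> bool" where
  "chirotope E chi \<longleftrightarrow> finite E \<and>
    (\<forall>x\<in>E. \<forall>y\<in>E. \<forall>z\<in>E. distinct3 x y z \<longrightarrow>
        chi x y z \<in> {-1, 1} \<and> chi y z x = chi x y z \<and> chi y x z = - chi x y z) \<and>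
    (\<comment> \<open>interiority\<close>
     \<forall>x\<in>E. \<forall>y\<in>E. \<forall>z\<in>E. \<forall>t\<in>E. distinct3 x y z \<and> t \<notin> {x, y, z} \<longrightarrow>
        chi t y z = 1 \<and> chi x t z = 1 \<and> chi x y t = 1 \<longrightarrow> chi x y z = 1) \<and>
    (\<comment> \<open>transitivity\<close>
     \<forall>t\<in>E. \<forall>s\<in>E. \<forall>x\<in>E. \<forall>y\<in>E. \<forall>z\<in>E.
        distinct3 x y z \<and> t \<noteq> s \<and> t \<notin> {x, y, z} \<and> s \<notin> {x, y, z} \<longrightarrow>
        chi t s x = 1 \<and> chi t s y = 1 \<and> chi t s z = 1 \<and> chi t x y = 1 \<and> chi t y z = 1
        \<longrightarrow> chi t x z = 1)"

definition ccw :: "real \<times> real \<Rightarrow> real \<times> real \<Rightarrow> real \<times> real \<Rightarrow> bool" where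
  "ccw p q r \<longleftrightarrow>
     (fst q - fst p) * (snd r - snd p) - (snd q - snd p) * (fst r - fst p) > 0"

definition collinear3 :: "real \<times> real \<Rightarrow> real \<times> real \<Rightarrow> real \<times> real \<Rightarrow> bool" where
  "collinear3 p q r \<longleftrightarrow>
     (fst q - fst p) * (snd r - snd p) - (snd q - snd p) * (fst r - fst p) = 0"

definition realization :: "'a set \<Rightarrow> ('a \<Rightarrow> 'a \<Rightarrow> 'a \<Rightarrow> int) \<Rightarrow> ('a \<Rightarrow> real \<times> real) \<Rightarrow> bool" where
  "realization E chi p \<longleftrightarrow>
     (\<forall>x\<in>E. \<forall>y\<in>E. \<forall>z\<in>E. distinct3 x y z \<longrightarrow>
        \<not> collinear3 (p x) (p y) (p z) \<and> (chi x y z = 1 \<longleftrightarrow> ccw (p x) (p y) (p z)))"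

definition realizable :: "'a set \<Rightarrow> ('a \<Rightarrow> 'a \<Rightarrow> 'a \<Rightarrow> int) \<Rightarrow> bool" where
  "realizable E chi \<longleftrightarrow> (\<exists>p. realization E chi p)"

definition extreme :: "'a set \<Rightarrow> ('a \<Rightarrow> 'a \<Rightarrow> 'a \<Rightarrow> int) \<Rightarrow> 'a \<Rightarrow> bool" where
  "extreme E chi u \<longleftrightarrow> u \<in> E \<and>
     (\<exists>y\<in>E. y \<noteq> u \<and> (\<exists>c. \<forall>z\<in>E - {u, y}. chi u y z = c))"

definition rooted_chirotope :: "'a set \<Rightarrow> ('a \<Rightarrow> 'a \<Rightarrow> 'a \<Rightarrow> int) \<Rightarrow> 'a \<Rightarrow> bool" where
  "rooted_chirotope E chi u \<longleftrightarrow> chirotope E chi \<and> extreme E chi u"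

definition succ_hull :: "'a set \<Rightarrow> ('a \<Rightarrow> 'a \<Rightarrow> 'a \<Rightarrow> int) \<Rightarrow> 'a \<Rightarrow> 'a" where
  "succ_hull E chi u = (THE y. y \<in> E \<and> y \<noteq> u \<and> (\<forall>z\<in>E - {u, y}. chi u y z = 1))"

definition pred_hull :: "'a set \<Rightarrow> ('a \<Rightarrow> 'a \<Rightarrow> 'a \<Rightarrow> int) \<Rightarrow> 'a \<Rightarrow> 'a" where
  "pred_hull E chi u = (THE y. y \<in> E \<and> y \<noteq> u \<and> (\<forall>z\<in>E - {u, y}. chi y u z = 1))"

definition right_squeezing ::
  "'a set \<Rightarrow> ('a \<Rightarrow> 'a \<Rightarrow> 'a \<Rightarrow> int) \<Rightarrow> 'a \<Rightarrow> real \<Rightarrow> real \<Rightarrow> ('a \<Rightarrow> real \<times> real) \<Rightarrow> bool" where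
  "right_squeezing E chi u \<delta> \<epsilon> p \<longleftrightarrow>
     realization E chi p \<and>
     p u = (0, 1) \<and>
     p (succ_hull E chi u) = (0, 0) \<and>
     p (pred_hull E chi u) = (1, 0) \<and>
     (\<forall>e\<in>E. p e \<noteq> p u \<and> p e \<noteq> p (succ_hull E chi u) \<longrightarrow>
        p e \<in> {\<epsilon>..1} \<times> {-\<delta>..\<delta>}) \<and>
     (\<forall>x\<in>E - {u}. \<forall>y\<in>E - {u}. p x \<noteq> p y \<longrightarrow>
        fst (p x) \<noteq> fst (p y) \<and>
        (snd (p y) - snd (p x)) / (fst (p y) - fst (p x)) \<in> {-\<delta>..\<delta>})"

end

theory Submission
  imports Defs
begin


definition det3 :: "real \<times> real \<Rightarrow> real \<times> real \<Rightarrow> real \<times> real \<Rightarrow> real" where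
  "det3 p q r = (fst q - fst p) * (snd r - snd p) - (snd q - snd p) * (fst r - fst p)"

lemma ccw_det3: "ccw p q r \<longleftrightarrow> det3 p q r > 0"
  by (simp add: ccw_def det3_def)
lemma col_det3: "collinear3 p q r \<longleftrightarrow> det3 p q r = 0"
  by (simp add: collinear3_def det3_def)
lemma det3_cyc: "det3 b c a = det3 a b c"
  by (simp add: det3_def algebra_simps)
lemma det3_swap12: "det3 b a c = - det3 a b c"
  by (simp add: det3_def algebra_simps)
lemma det3_swap23: "det3 a c b = - det3 a b c"
  by (simp add: det3_def algebra_simps)
lemma det3_mirror: "det3 (fst a, - snd a) (fst b, - snd b) (fst c, - snd c) = - det3 a b c"
  by (simp add: det3_def algebra_simps)
lemma det3_scale: "det3 (x1, k*y1) (x2, k*y2) (x3, k*y3) = k * det3 (x1,y1) (x2,y2) (x3,y3)"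
  by (simp add: det3_def algebra_simps)

lemma pred_exists:
  fixes q :: "'a \<Rightarrow> real \<times> real"
  assumes fin: "finite F" and u: "u \<in> F" and y: "y \<in> F" "y \<noteq> u"
    and z0: "z0 \<in> F" "z0 \<noteq> u" "z0 \<noteq> y"
    and pos: "\<forall>z\<in>F - {u, y}. det3 (q u) (q y) (q z) > 0"
    and nc: "\<forall>a\<in>F. \<forall>b\<in>F. a \<noteq> u \<and> b \<noteq> u \<and> a \<noteq> b \<longrightarrow> det3 (q u) (q a) (q b) \<noteq> 0"
  shows "\<exists>w\<in>F. w \<noteq> u \<and> (\<forall>z\<in>F - {u, w}. det3 (q w) (q u) (q z) > 0)"
proof -
  define dx where "dx = fst (q y) - fst (q u)"
  define dy where "dy = snd (q y) - snd (q u)"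
  define vx where "vx z = fst (q z) - fst (q u)" for z
  define vy where "vy z = snd (q z) - snd (q u)" for z
  define aa where "aa z = dx * vx z + dy * vy z" for z
  define hh where "hh z = dx * vy z - dy * vx z" for z
  have hh_det: "hh z = det3 (q u) (q y) (q z)" for z
    by (simp add: hh_def det3_def dx_def dy_def vx_def vy_def)
  define F' where "F' = F - {u, y}"
  have F'ne: "F' \<noteq> {}" using z0 by (auto simp: F'_def)
  have F'fin: "finite F'" using fin by (simp add: F'_def)
  define phi where "phi z = aa z / hh z" for z
  obtain w where w: "w \<in> F'" "\<forall>z\<in>F'. phi w \<le> phi z"
  proof -
    let ?m = "Min (phi ` F')"
    have "?m \<in> phi ` F'" using F'ne F'fin by simp
    then obtain w where "w \<in> F'" "phi w = ?m" by auto
    moreover have "\<forall>z\<in>F'. ?m \<le> phi z" using F'fin by simp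
    ultimately show ?thesis using that by metis
  qed
  have hpos: "hh z > 0" if "z \<in> F'" for z using pos that hh_det by (simp add: F'_def)
  have dnz: "dx^2 + dy^2 > 0"
  proof -
    have "hh z0 > 0" using hpos z0 by (simp add: F'_def)
    then have "dx \<noteq> 0 \<or> dy \<noteq> 0" by (auto simp: hh_def)
    then show ?thesis by (simp add: add_pos_pos sum_power2_gt_zero_iff)
  qed
  have ident: "(vx w * vy z - vy w * vx z) * (dx^2 + dy^2) = aa w * hh z - hh w * aa z" for z
    by (simp add: aa_def hh_def power2_eq_square algebra_simps)
  have "\<forall>z\<in>F - {u, w}. det3 (q w) (q u) (q z) > 0"
  proof
    fix z assume z: "z \<in> F - {u, w}"
    show "det3 (q w) (q u) (q z) > 0"
    proof (cases "z = y")
      case True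
      then show ?thesis using hpos[OF w(1)] hh_det det3_cyc by metis
    next
      case False
      then have zF': "z \<in> F'" using z by (auto simp: F'_def)
      have "phi w \<le> phi z" using w zF' by auto
      then have "aa w * hh z \<le> aa z * hh w"
        using hpos[OF w(1)] hpos[OF zF'] by (simp add: phi_def divide_simps)
      then have le: "(vx w * vy z - vy w * vx z) * (dx^2 + dy^2) \<le> 0"
        using ident[of z] by (simp add: algebra_simps)
      have eq: "det3 (q w) (q u) (q z) = - (vx w * vy z - vy w * vx z)"
        by (simp add: det3_def vx_def vy_def algebra_simps)
      have "det3 (q u) (q w) (q z) \<noteq> 0"
        using nc w(1) zF' z by (auto simp: F'_def)
      then have ne: "vx w * vy z - vy w * vx z \<noteq> 0"
        by (simp add: det3_def vx_def vy_def algebra_simps)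
      have "vx w * vy z - vy w * vx z < 0"
        using le ne dnz by (meson antisym_conv2 mult_le_0_iff not_le)
      then show ?thesis using eq by simp
    qed
  qed
  then show ?thesis using w(1) by (auto simp: F'_def)
qed


lemma det3_shift: "det3 (x1, y1 - k) (x2, y2 - k) (x3, y3 - k) = det3 (x1,y1) (x2,y2) (x3,y3)"
  by (simp add: det3_def algebra_simps)
lemma det3_hom: "det3 (xa,ya) (xb,yb) (xc,yc) = xa*(yb-yc) - ya*(xb - xc) + (xb*yc - yb*xc)"
  by (simp add: det3_def algebra_simps)
lemma key1:
  fixes Sa Sb Sc :: real
  assumes "Sa \<noteq> 0" "Sb \<noteq> 0" "Sc \<noteq> 0"
  shows "det3 (Ba/Sa, D/Sa) (Bb/Sb, D/Sb) (Bc/Sc, D/Sc) * (Sa*Sb*Sc)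
     = D * (Ba*(Sc-Sb) + Bb*(Sa-Sc) + Bc*(Sb-Sa))"
proof -
  have "det3 (Ba/Sa, D/Sa) (Bb/Sb, D/Sb) (Bc/Sc, D/Sc) * (Sa*Sb*Sc)
     = (Ba/Sa*(D/Sb-D/Sc) - D/Sa*(Bb/Sb - Bc/Sc) + (Bb/Sb*(D/Sc) - D/Sb*(Bc/Sc))) * (Sa*Sb*Sc)"
    by (simp add: det3_hom)
  also have "\<dots> = D * (Ba*(Sc-Sb) + Bb*(Sa-Sc) + Bc*(Sb-Sa))"
    using assms by (simp add: field_simps)
  finally show ?thesis .
qed
lemma key2:
  fixes ax ay bx by' cx cy sx sy wx wy :: real
  shows "let A = (\<lambda>x y. x * wy - y * wx); B = (\<lambda>x y. sx * y - sy * x) in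
    (B ax ay*((A cx cy + B cx cy)-(A bx by' + B bx by')) + B bx by'*((A ax ay + B ax ay)-(A cx cy + B cx cy))
      + B cx cy*((A bx by' + B bx by')-(A ax ay + B ax ay)))
   = (sx * wy - sy * wx) * det3 (ax, ay) (bx, by') (cx, cy)"
  by (simp add: det3_def Let_def algebra_simps)


lemma sign_trans: "(X::real) * Y > 0 \<Longrightarrow> Y * Z > 0 \<Longrightarrow> X * Z > 0"
  by (auto simp: zero_less_mult_iff)

theorem lemma2p6:
  fixes E :: "'a set" and chi :: "'a \<Rightarrow> 'a \<Rightarrow> 'a \<Rightarrow> int" and u :: 'a
  assumes "finite E" and "card E \<ge> 3"
    and "rooted_chirotope E chi u"
    and "realizable E chi"
  shows "\<exists>\<epsilon>>0. \<forall>\<delta>>0. \<exists>p. right_squeezing E chi u \<delta> \<epsilon> p"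
proof -
  obtain q where q: "realization E chi q" using assms(4) realizable_def by auto
  have ext: "extreme E chi u" using assms(3) unfolding rooted_chirotope_def by blast
  have uE: "u \<in> E" using ext unfolding extreme_def by blast
  have qnc: "det3 (q x) (q y) (q z) \<noteq> 0"
    if "x \<in> E" "y \<in> E" "z \<in> E" "x \<noteq> y" "y \<noteq> z" "x \<noteq> z" for x y z
    using q that by (auto simp: realization_def distinct3_def col_det3)
  have qchi: "chi x y z = 1 \<longleftrightarrow> det3 (q x) (q y) (q z) > 0"
    if "x \<in> E" "y \<in> E" "z \<in> E" "x \<noteq> y" "y \<noteq> z" "x \<noteq> z" for x y z
    using q that by (auto simp: realization_def distinct3_def ccw_det3)
  have third: "\<exists>z\<in>E. z \<noteq> a \<and> z \<noteq> b" for a b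
  proof (rule ccontr)
    assume "\<not> ?thesis"
    then have "E \<subseteq> {a, b}" by auto
    then have "card E \<le> card {a, b}" by (simp add: card_mono)
    also have "\<dots> \<le> 2" by (cases "a = b") auto
    finally show False using assms(2) by simp
  qed
  obtain y c0 where y: "y \<in> E" "y \<noteq> u" "\<forall>z\<in>E - {u, y}. chi u y z = c0"
    using ext unfolding extreme_def by metis
  obtain z0 where z0: "z0 \<in> E" "z0 \<noteq> u" "z0 \<noteq> y" using third by blast
  obtain s w where sE: "s \<in> E" "s \<noteq> u" and wE: "w \<in> E" "w \<noteq> u"
    and SP: "\<forall>z\<in>E - {u, s}. det3 (q u) (q s) (q z) > 0"
    and WP: "\<forall>z\<in>E - {u, w}. det3 (q w) (q u) (q z) > 0"
  proof (cases "c0 = 1")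
    case True
    have pos: "\<forall>z\<in>E - {u, y}. det3 (q u) (q y) (q z) > 0"
      using y True qchi uE by auto
    have nc: "\<forall>a\<in>E. \<forall>b\<in>E. a \<noteq> u \<and> b \<noteq> u \<and> a \<noteq> b \<longrightarrow> det3 (q u) (q a) (q b) \<noteq> 0"
      using qnc uE by auto
    obtain w where "w \<in> E" "w \<noteq> u" "\<forall>z\<in>E - {u, w}. det3 (q w) (q u) (q z) > 0"
      using pred_exists[OF assms(1) uE y(1,2) z0 pos nc] by blast
    then show ?thesis using that y pos by blast
  next
    case False
    define q' where "q' e = (fst (q e), - snd (q e))" for e
    have m: "det3 (q' a) (q' b) (q' c) = - det3 (q a) (q b) (q c)" for a b c
      unfolding q'_def by (rule det3_mirror)
    have pos0: "det3 (q u) (q y) (q z) < 0" if "z \<in> E - {u, y}" for z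
    proof -
      have "chi u y z \<noteq> 1" using y False that by auto
      then have "\<not> det3 (q u) (q y) (q z) > 0" using qchi[of u y z] that uE y(1,2) by auto
      moreover have "det3 (q u) (q y) (q z) \<noteq> 0" using qnc that uE y by auto
      ultimately show ?thesis by linarith
    qed
    have pos: "\<forall>z\<in>E - {u, y}. det3 (q' u) (q' y) (q' z) > 0"
      using pos0 m by auto
    have nc: "\<forall>a\<in>E. \<forall>b\<in>E. a \<noteq> u \<and> b \<noteq> u \<and> a \<noteq> b \<longrightarrow> det3 (q' u) (q' a) (q' b) \<noteq> 0"
      using qnc uE m by auto
    obtain s where s: "s \<in> E" "s \<noteq> u" "\<forall>z\<in>E - {u, s}. det3 (q' s) (q' u) (q' z) > 0"
      using pred_exists[OF assms(1) uE y(1,2) z0 pos nc] by blast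
    have SP: "\<forall>z\<in>E - {u, s}. det3 (q u) (q s) (q z) > 0"
      using s(3) m det3_swap12 by (metis neg_0_less_iff_less)
    have WP: "\<forall>z\<in>E - {u, y}. det3 (q y) (q u) (q z) > 0"
      using pos0 det3_swap12 by (metis neg_0_less_iff_less)
    show ?thesis using that s(1,2) y(1,2) SP WP by blast
  qed
  have D0: "det3 (q u) (q s) (q w) > 0"
  proof -
    obtain z where z: "z \<in> E" "z \<noteq> u" "z \<noteq> s" using third by blast
    have "s \<noteq> w"
    proof
      assume "s = w"
      then have "det3 (q u) (q s) (q z) > 0" "det3 (q s) (q u) (q z) > 0" using SP WP z by auto
      then show False using det3_swap12[of "q s" "q u" "q z"] by linarith
    qed
    then show ?thesis using SP wE by auto
  qed
  have succ: "succ_hull E chi u = s"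
    unfolding succ_hull_def
  proof (rule the_equality)
    show "s \<in> E \<and> s \<noteq> u \<and> (\<forall>z\<in>E - {u, s}. chi u s z = 1)"
      using sE SP qchi uE by auto
  next
    fix y' assume H: "y' \<in> E \<and> y' \<noteq> u \<and> (\<forall>z\<in>E - {u, y'}. chi u y' z = 1)"
    show "y' = s"
    proof (rule ccontr)
      assume ne: "y' \<noteq> s"
      then have "chi u y' s = 1" using H sE by auto
      then have "det3 (q u) (q y') (q s) > 0" using qchi H sE uE ne by auto
      moreover have "det3 (q u) (q s) (q y') > 0" using SP H ne by auto
      ultimately show False using det3_swap23[of "q u" "q s" "q y'"] by linarith
    qed
  qed
  have pred: "pred_hull E chi u = w"
    unfolding pred_hull_def
  proof (rule the_equality)
    show "w \<in> E \<and> w \<noteq> u \<and> (\<forall>z\<in>E - {u, w}. chi w u z = 1)"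
      using wE WP qchi uE by auto
  next
    fix y' assume H: "y' \<in> E \<and> y' \<noteq> u \<and> (\<forall>z\<in>E - {u, y'}. chi y' u z = 1)"
    show "y' = w"
    proof (rule ccontr)
      assume ne: "y' \<noteq> w"
      then have "chi y' u w = 1" using H wE by auto
      then have "det3 (q y') (q u) (q w) > 0" using qchi H wE uE ne by auto
      moreover have "det3 (q w) (q u) (q y') > 0" using WP H ne by auto
      moreover have "det3 (q w) (q u) (q y') = - det3 (q y') (q u) (q w)"
        by (simp add: det3_def algebra_simps)
      ultimately show False by linarith
    qed
  qed
  define vx where "vx e = fst (q e) - fst (q u)" for e
  define vy where "vy e = snd (q e) - snd (q u)" for e
  define A where "A e = vx e * vy w - vy e * vx w" for e
  define B where "B e = vx s * vy e - vy s * vx e" for e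
  define S where "S e = A e + B e" for e
  define D where "D = det3 (q u) (q s) (q w)"
  define t where "t e = B e / S e" for e
  define h where "h e = D / S e - 1" for e
  have vdet: "det3 (q u) (q a) (q b) = vx a * vy b - vy a * vx b" for a b
    by (simp add: det3_def vx_def vy_def)
  have A_det: "A e = det3 (q w) (q u) (q e)" for e
    by (simp add: A_def det3_def vx_def vy_def algebra_simps)
  have B_det: "B e = det3 (q u) (q s) (q e)" for e
    by (simp add: B_def vdet)
  have Dpos: "D > 0" using D0 D_def by simp
  have As: "A s = D" unfolding A_det D_def by (simp add: det3_def algebra_simps)
  have Bs: "B s = 0" using B_det by (simp add: det3_def)
  have Aw: "A w = 0" using A_det by (simp add: det3_def)
  have Bw: "B w = D" using B_det D_def by simp
  have Age: "A e \<ge> 0" if "e \<in> E" "e \<noteq> u" for e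
  proof (cases "e = w")
    case True then show ?thesis using Aw by simp
  next
    case False
    then have "det3 (q w) (q u) (q e) > 0" using WP that by blast
    then show ?thesis using A_det by simp
  qed
  have Bpos: "B e > 0" if "e \<in> E" "e \<noteq> u" "e \<noteq> s" for e
    using SP that B_det by auto
  have Bge: "B e \<ge> 0" if "e \<in> E" "e \<noteq> u" for e
    using Bpos[of e] that Bs by (cases "e = s") auto
  have Spos: "S e > 0" if "e \<in> E" "e \<noteq> u" for e
  proof (cases "e = s")
    case True then show ?thesis using As Bs Dpos S_def by simp
  next
    case False then show ?thesis using Bpos[of e] Age[of e] that S_def by simp
  qed
  have ts: "t s = 0" using Bs t_def by simp
  have hs: "h s = 0" using As Bs Dpos by (simp add: h_def S_def)
  have tw: "t w = 1" using Aw Bw Dpos by (simp add: t_def S_def)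
  have hw: "h w = 0" using Aw Bw Dpos by (simp add: h_def S_def)
  have t01: "0 \<le> t e \<and> t e \<le> 1" if "e \<in> E" "e \<noteq> u" for e
    using Age[OF that] Bge[OF that] Spos[OF that] by (simp add: t_def S_def divide_simps)
  have tpos: "t e > 0" if "e \<in> E" "e \<noteq> u" "e \<noteq> s" for e
    using Bpos[OF that] Spos[OF that(1,2)] by (simp add: t_def)
  have tdiff: "t b - t a = D * det3 (q u) (q a) (q b) / (S a * S b)"
    if "a \<in> E" "a \<noteq> u" "b \<in> E" "b \<noteq> u" for a b
  proof -
    have "D * det3 (q u) (q a) (q b) = A a * B b - B a * A b"
      unfolding vdet D_def A_def B_def by (simp add: algebra_simps)
    moreover have "t b - t a = (A a * B b - B a * A b) / (S a * S b)"
      using Spos[OF that(1,2)] Spos[OF that(3,4)]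
      by (simp add: t_def S_def field_simps)
    ultimately show ?thesis by simp
  qed
  have tinj: "t a \<noteq> t b" if "a \<in> E" "a \<noteq> u" "b \<in> E" "b \<noteq> u" "a \<noteq> b" for a b
  proof
    assume "t a = t b"
    then have "D * det3 (q u) (q a) (q b) / (S a * S b) = 0" using tdiff[OF that(1-4)] by simp
    moreover have "det3 (q u) (q a) (q b) \<noteq> 0" using qnc that uE by auto
    ultimately show False using Dpos Spos[OF that(1,2)] Spos[OF that(3,4)] by simp
  qed
  have keyn: "det3 (t a, h a) (t b, h b) (t c, h c) * (S a * S b * S c)
      = D^2 * det3 (q a) (q b) (q c)"
    if "a \<in> E" "a \<noteq> u" "b \<in> E" "b \<noteq> u" "c \<in> E" "c \<noteq> u" for a b c
  proof -
    have "det3 (t a, h a) (t b, h b) (t c, h c)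
       = det3 (B a / S a, D / S a) (B b / S b, D / S b) (B c / S c, D / S c)"
      unfolding t_def h_def by (rule det3_shift)
    then have "det3 (t a, h a) (t b, h b) (t c, h c) * (S a * S b * S c)
       = D * (B a*(S c-S b) + B b*(S a-S c) + B c*(S b-S a))"
      using key1[of "S a" "S b" "S c"] Spos that by (metis less_irrefl)
    also have "\<dots> = D * (D * det3 (vx a, vy a) (vx b, vy b) (vx c, vy c))"
      using key2[where sx="vx s" and sy="vy s" and wx="vx w" and wy="vy w" and ax="vx a" and ay="vy a" and bx="vx b" and by'="vy b" and cx="vx c" and cy="vy c"]
      unfolding S_def A_def B_def D_def vdet Let_def by simp
    also have "det3 (vx a, vy a) (vx b, vy b) (vx c, vy c) = det3 (q a) (q b) (q c)"
      by (simp add: det3_def vx_def vy_def algebra_simps)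
    finally show ?thesis by (simp add: power2_eq_square)
  qed
  define T where "T = E - {u}"
  have Tfin: "finite T" using assms(1) T_def by simp
  define PP where "PP = {(a, b). a \<in> T \<and> b \<in> T \<and> a \<noteq> b}"
  have PPfin: "finite PP"
  proof -
    have "PP \<subseteq> T \<times> T" by (auto simp: PP_def)
    then show ?thesis using Tfin finite_subset by blast
  qed
  have swPP: "(s, w) \<in> PP" using sE wE D0 by (auto simp: PP_def T_def det3_def)
  define g where "g = Min ((\<lambda>(a, b). \<bar>t a - t b\<bar>) ` PP)"
  have gle: "g \<le> \<bar>t a - t b\<bar>" if "a \<in> E" "a \<noteq> u" "b \<in> E" "b \<noteq> u" "a \<noteq> b" for a b
  proof -
    have "(a, b) \<in> PP" using that by (auto simp: PP_def T_def)
    then show ?thesis unfolding g_def using PPfin by (auto intro!: Min_le)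
  qed
  have gpos: "g > 0"
  proof -
    have "g \<in> (\<lambda>(a, b). \<bar>t a - t b\<bar>) ` PP" unfolding g_def using PPfin swPP
      by (intro Min_in) auto
    then obtain a b where "(a, b) \<in> PP" "g = \<bar>t a - t b\<bar>" by auto
    then show ?thesis using tinj by (auto simp: PP_def T_def)
  qed
  define M where "M = Max ((\<lambda>e. \<bar>h e\<bar>) ` T)"
  have Mge: "\<bar>h e\<bar> \<le> M" if "e \<in> E" "e \<noteq> u" for e
    unfolding M_def using Tfin that by (auto simp: T_def intro!: Max_ge)
  have M0: "M \<ge> 0" using Mge[OF sE] by simp
  define eps where "eps = Min (t ` (E - {u, s}))"
  have epsle: "eps \<le> t e" if "e \<in> E" "e \<noteq> u" "e \<noteq> s" for e
    unfolding eps_def using assms(1) that by (auto intro!: Min_le)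
  have epspos: "eps > 0"
  proof -
    have "E - {u, s} \<noteq> {}" using third by blast
    then have "eps \<in> t ` (E - {u, s})" unfolding eps_def using assms(1) by (intro Min_in) auto
    then show ?thesis using tpos by auto
  qed
  show ?thesis
  proof (intro exI[of _ eps] conjI allI impI)
    show "eps > 0" by (rule epspos)
    fix \<delta> :: real assume dpos: "\<delta> > 0"
    define c where "c = min (\<delta> / (M + 1)) (min (\<delta> * g / (2 * M + 1)) (g / (2 * M + 1)))"
    have cpos: "c > 0" using dpos gpos M0 by (simp add: c_def)
    have c1: "c * (M + 1) \<le> \<delta>"
    proof -
      have "c \<le> \<delta> / (M + 1)" by (simp add: c_def)
      then show ?thesis using M0 by (simp add: pos_le_divide_eq)
    qed
    have c2: "c * (2 * M + 1) \<le> \<delta> * g"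
    proof -
      have "c \<le> \<delta> * g / (2 * M + 1)" by (simp add: c_def)
      then show ?thesis using M0 by (simp add: pos_le_divide_eq)
    qed
    have c3: "c * (2 * M + 1) \<le> g"
    proof -
      have "c \<le> g / (2 * M + 1)" by (simp add: c_def)
      then show ?thesis using M0 by (simp add: pos_le_divide_eq)
    qed
    have cM: "c * M \<le> \<delta>" using c1 cpos by (simp add: algebra_simps)
    have cM2: "2 * c * M \<le> \<delta> * g" using c2 cpos by (simp add: algebra_simps)
    have cM3: "2 * c * M < g" using c3 cpos by (simp add: algebra_simps)
    have chb: "\<bar>c * h e\<bar> \<le> c * M" if "e \<in> E" "e \<noteq> u" for e
      using Mge[OF that] cpos by (simp add: abs_mult)
    define p where "p e = (if e = u then (0::real, 1::real) else (t e, c * h e))" for e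
    have Gu: "det3 (p u) (p a) (p b) * det3 (q u) (q a) (q b) > 0"
      if "a \<in> E" "a \<noteq> u" "b \<in> E" "b \<noteq> u" "a \<noteq> b" for a b
    proof -
      have e1: "det3 (p u) (p a) (p b) = (t b - t a) + (t a * (c * h b) - (c * h a) * t b)"
        using that by (simp add: p_def det3_def algebra_simps)
      have b1: "\<bar>t a * (c * h b)\<bar> \<le> c * M"
      proof -
        have "\<bar>t a * (c * h b)\<bar> = \<bar>t a\<bar> * \<bar>c * h b\<bar>" by (simp add: abs_mult)
        also have "\<dots> \<le> 1 * (c * M)"
          using t01[OF that(1,2)] chb[OF that(3,4)] by (intro mult_mono) auto
        finally show ?thesis by simp
      qed
      have b2: "\<bar>(c * h a) * t b\<bar> \<le> c * M"
      proof -
        have "\<bar>(c * h a) * t b\<bar> = \<bar>c * h a\<bar> * \<bar>t b\<bar>" by (simp add: abs_mult)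
        also have "\<dots> \<le> (c * M) * 1"
          using t01[OF that(3,4)] chb[OF that(1,2)] cpos M0 by (intro mult_mono) auto
        finally show ?thesis by simp
      qed
      have gab: "g \<le> \<bar>t b - t a\<bar>" using gle[OF that(3,4,1,2)] that(5) by auto
      have s1: "det3 (p u) (p a) (p b) * (t b - t a) > 0"
      proof (cases "t b - t a > 0")
        case True
        then have "det3 (p u) (p a) (p b) > 0" using e1 b1 b2 gab cM3 by linarith
        then show ?thesis using True by simp
      next
        case False
        then have "det3 (p u) (p a) (p b) < 0" using e1 b1 b2 gab cM3 by linarith
        then show ?thesis using False tinj[OF that] by (simp add: mult_neg_neg)
      qed
      have nz: "det3 (q u) (q a) (q b) \<noteq> 0" using qnc that uE by auto
      have sq: "det3 (q u) (q a) (q b) * det3 (q u) (q a) (q b) > 0"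
        using nz by (simp add: zero_less_mult_iff) linarith
      have s2: "(t b - t a) * det3 (q u) (q a) (q b) > 0"
        unfolding tdiff[OF that(1-4)] using Dpos Spos[OF that(1,2)] Spos[OF that(3,4)] sq
        by (simp add: mult.assoc)
      show ?thesis using sign_trans[OF s1 s2] .
    qed
    have Gn: "det3 (p a) (p b) (p d) * det3 (q a) (q b) (q d) > 0"
      if "a \<in> E" "a \<noteq> u" "b \<in> E" "b \<noteq> u" "d \<in> E" "d \<noteq> u" "a \<noteq> b" "b \<noteq> d" "a \<noteq> d"
      for a b d
    proof -
      have e1: "det3 (p a) (p b) (p d) = c * det3 (t a, h a) (t b, h b) (t d, h d)"
        using that by (simp add: p_def det3_scale)
      have nz: "det3 (q a) (q b) (q d) \<noteq> 0" using qnc that by auto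
      have SSS: "S a * S b * S d > 0" using Spos that by simp
      have "det3 (p a) (p b) (p d) * det3 (q a) (q b) (q d) * (S a * S b * S d)
         = c * D^2 * (det3 (q a) (q b) (q d))^2"
        unfolding e1 using keyn[OF that(1-6)]
        by (simp add: power2_eq_square algebra_simps)
      also have "\<dots> > 0" using cpos Dpos nz by simp
      finally show ?thesis using SSS by (simp add: zero_less_mult_iff)
    qed
    have G: "det3 (p x) (p y) (p z) * det3 (q x) (q y) (q z) > 0"
      if "x \<in> E" "y \<in> E" "z \<in> E" "x \<noteq> y" "y \<noteq> z" "x \<noteq> z" for x y z
    proof -
      have cyc: "det3 a b c' = det3 b c' a" for a b c' by (simp add: det3_def algebra_simps)
      consider "x = u" | "y = u" | "z = u" | "x \<noteq> u" "y \<noteq> u" "z \<noteq> u" by blast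
      then show ?thesis
      proof cases
        case 1 then show ?thesis using Gu that by auto
      next
        case 2 then show ?thesis using Gu[of z x] that cyc by (metis)
      next
        case 3 then show ?thesis using Gu[of x y] that cyc by (metis)
      next
        case 4 then show ?thesis using Gn that by auto
      qed
    qed
    have real: "realization E chi p"
      unfolding realization_def
    proof (intro ballI impI conjI)
      fix x y z assume xyz: "x \<in> E" "y \<in> E" "z \<in> E" "distinct3 x y z"
      have d: "x \<noteq> y" "y \<noteq> z" "x \<noteq> z" using xyz(4) by (auto simp: distinct3_def)
      have g: "det3 (p x) (p y) (p z) * det3 (q x) (q y) (q z) > 0" using G xyz d by auto
      show "\<not> collinear3 (p x) (p y) (p z)" using g by (auto simp: col_det3)
      have "chi x y z = 1 \<longleftrightarrow> det3 (q x) (q y) (q z) > 0" using qchi xyz d by auto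
      also have "\<dots> \<longleftrightarrow> det3 (p x) (p y) (p z) > 0" using g by (auto simp: zero_less_mult_iff)
      finally show "chi x y z = 1 \<longleftrightarrow> ccw (p x) (p y) (p z)" by (simp add: ccw_det3)
    qed
    have box: "\<forall>e\<in>E. p e \<noteq> p u \<and> p e \<noteq> p s \<longrightarrow> p e \<in> {eps..1} \<times> {-\<delta>..\<delta>}"
    proof (intro ballI impI)
      fix e assume e: "e \<in> E" "p e \<noteq> p u \<and> p e \<noteq> p s"
      then have eu: "e \<noteq> u" and es: "e \<noteq> s" by auto
      have "\<bar>c * h e\<bar> \<le> \<delta>" using chb[OF e(1) eu] cM by linarith
      then show "p e \<in> {eps..1} \<times> {-\<delta>..\<delta>}"
        using epsle[OF e(1) eu es] t01[OF e(1) eu] eu by (auto simp: p_def abs_le_iff)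
    qed
    have slope: "\<forall>x\<in>E - {u}. \<forall>y\<in>E - {u}. p x \<noteq> p y \<longrightarrow>
        fst (p x) \<noteq> fst (p y) \<and>
        (snd (p y) - snd (p x)) / (fst (p y) - fst (p x)) \<in> {-\<delta>..\<delta>}"
    proof (intro ballI impI)
      fix x y assume x: "x \<in> E - {u}" and y: "y \<in> E - {u}" and ne: "p x \<noteq> p y"
      then have xy: "x \<noteq> y" by auto
      have tne: "t x \<noteq> t y" using tinj x y xy by auto
      have num: "\<bar>c * h y - c * h x\<bar> \<le> 2 * c * M"
        using chb[of x] chb[of y] x y by (auto simp: abs_le_iff)
      have den: "g \<le> \<bar>t y - t x\<bar>" using gle x y xy by auto
      have "\<bar>c * h y - c * h x\<bar> \<le> \<delta> * \<bar>t y - t x\<bar>"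
        using num cM2 den dpos by (meson mult_left_mono less_imp_le order_trans)
      then have "\<bar>(c * h y - c * h x) / (t y - t x)\<bar> \<le> \<delta>"
        using tne by (simp add: abs_divide divide_le_eq)
      then have r: "-\<delta> \<le> (c * h y - c * h x) / (t y - t x) \<and> (c * h y - c * h x) / (t y - t x) \<le> \<delta>"
        unfolding abs_le_iff by linarith
      have px: "p x = (t x, c * h x)" "p y = (t y, c * h y)" using x y by (auto simp: p_def)
      show "fst (p x) \<noteq> fst (p y) \<and>
        (snd (p y) - snd (p x)) / (fst (p y) - fst (p x)) \<in> {-\<delta>..\<delta>}"
        unfolding px using tne r by simp
    qed
    have pu: "p u = (0, 1)" by (simp add: p_def)
    have ps: "p s = (0, 0)" using sE ts hs by (simp add: p_def)
    have pw: "p w = (1, 0)" using wE tw hw by (simp add: p_def)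
    show "\<exists>p. right_squeezing E chi u \<delta> eps p"
      unfolding right_squeezing_def succ pred
      using real pu ps pw box slope by blast
  qed
qed
end
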